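(* Let $G$ and $H$ be connected graphs without isolated vertices such that $\gamma_t(H)=2$ and $\gamma_t(G)=\gamma_t(G\Box H)$. Let $V(H)=\{h_1,\ldots,h_n\}$ and let $D$ be a minimum total dominating set of $G\Box H$. Define $D'=\{(g,h)\in D : \text{there exists } h'\in V(H),\ h'\neq h,\ (g,h')\in D\}$, $D''=D\setminus D'$, and $D''_i=\{(g,h)\in D'': h=h_i\}$ for $i\in\{1,\ldots,n\}$. Let $p_G:V(G\Box H)\to V(G)$, $p_G(g,h)=g$, and set $S=p_G(D)$, $S'=p_G(D')$, $S''=p_G(D'')$, $S''_i=p_G(D''_i)$, $P=N_G(S)\setminus S$, $P'=N_G(S')\setminus S'$, $P''=N_G(S'')\setminus S''$. Then: (A) $S\cup P=V(G)$. (B) $\gamma_t(G)=2|S'|+|S''|$. (C) $S'$ is an independent set and no two vertices of $S'$ have a common neighbor in $G$. (D) There are no edges of $G$ between $S'$ and $S''$. (E) There exists a nonnegative integer $k$ such that $G[S'']$ is isomorphic to $kK_2$. (E') If $T'$ is a minimum-size set of vertices of $G$ that totally dominates $S'$ (i.e. $S'\subseteq N_G(T')$), then $T'\subseteq P'$, $|T'|=|S'|$, and $X=S'\cup T'\cup S''$ is a minimum total dominating set of $G$; moreover, for every $g\in S''$, the set $\mathit{pn}_G(g,X)$ is a subset of $S''$ of size $1$. (F) For every $i\in\{1,\ldots,n\}$ there exists a nonnegative integer $k$ such that $G[S''_i]$ is isomorphic to $kK_2$. (G) For every $i\in\{1,\ldots,n\}$, $S''_i$ totally dominates $P''\cup S''_i$,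 i.e. $P''\cup S''_i\subseteq N_G(S''_i)$. (H) For every $i\in\{1,\ldots,n\}$, no two distinct vertices of $S''_i$ have a common neighbor in $G$. (I) No vertex of $S'$ has a common neighbor in $G$ with a vertex of $S''$. (J) The sets $S'$, $S''$, $P'$, $P''$ are pairwise disjoint. (K) $\gamma_t(G[S'\cup P'])=2\gamma(G[S'\cup P'])=2|S'|$. (L) $\gamma_t(G[S''\cup P''])=|S''|$. (M) If $H$ is not isomorphic to $K_2$, then $S'=\emptyset$.
   Context: All graphs are finite, simple and undirected. $N_G(v)$ is the (open) neighborhood of $v$ and $N_G(X)=\bigcup_{v\in X}N_G(v)$. A set $X\subseteq V(G)$ totally dominates $Y\subseteq V(G)$ if $Y\subseteq N_G(X)$; a total dominating set of a graph $G$ without isolated vertices is a set $S$ with $N_G(S)=V(G)$, and the total domination number $\gamma_t(G)$ is the minimum size of such a set. $\gamma(G)$ is the domination number. $G[X]$ is the subgraph induced by $X$. $kK_2$ is the disjoint union of $k$ copies of $K_2$. The Cartesian product $G\Box H$ has vertex set $V(G)\times V(H)$, with $(u_1,v_1)\sim(u_2,v_2)$ iff either $u_1=u_2$ and $v_1v_2\in E(H)$, or $v_1=v_2$ and $u_1u_2\in E(G)$. For $X\subseteq V(G)$ and $u\in X$, $\mathit{pn}_G(u,X)=\{w\in V(G): N_G(w)\cap X=\{u\}\}$ (the $X$-private neighbors of $u$). *)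

theory Defs
  imports Main
begin

record 'a graph =
  verts :: "'a set"
  adj :: "'a \<Rightarrow> 'a \<Rightarrow> bool"

definition simple_graph :: "'a graph \<Rightarrow> bool" where
  "simple_graph G \<longleftrightarrow> finite (verts G)
     \<and> (\<forall>u v. adj G u v \<longrightarrow> u \<in> verts G \<and> v \<in> verts G)
     \<and> (\<forall>u v. adj G u v \<longrightarrow> adj G v u)
     \<and> (\<forall>u. \<not> adj G u u)"

definition nbhd :: "'a graph \<Rightarrow> 'a \<Rightarrow> 'a set" where
  "nbhd G v = {w \<in> verts G. adj G v w}"

definition nbhd_set :: "'a graph \<Rightarrow> 'a set \<Rightarrow> 'a set" where
  "nbhd_set G X = (\<Union>v\<in>X. nbhd G v)"

definition no_isolated :: "'a graph \<Rightarrow> bool" where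
  "no_isolated G \<longleftrightarrow> (\<forall>v\<in>verts G. nbhd G v \<noteq> {})"

definition connected_graph :: "'a graph \<Rightarrow> bool" where
  "connected_graph G \<longleftrightarrow> verts G \<noteq> {}
     \<and> (\<forall>u\<in>verts G. \<forall>v\<in>verts G. (adj G)\<^sup>*\<^sup>* u v)"

definition independent_set :: "'a graph \<Rightarrow> 'a set \<Rightarrow> bool" where
  "independent_set G S \<longleftrightarrow> S \<subseteq> verts G \<and> (\<forall>u\<in>S. \<forall>v\<in>S. \<not> adj G u v)"

definition total_dominating_set :: "'a graph \<Rightarrow> 'a set \<Rightarrow> bool" where
  "total_dominating_set G S \<longleftrightarrow> S \<subseteq> verts G \<and> nbhd_set G S = verts G"

definition gamma_t :: "'a graph \<Rightarrow> nat" where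
  "gamma_t G = (LEAST k. \<exists>S. total_dominating_set G S \<and> card S = k)"

definition dominating_set :: "'a graph \<Rightarrow> 'a set \<Rightarrow> bool" where
  "dominating_set G S \<longleftrightarrow> S \<subseteq> verts G
     \<and> (\<forall>v\<in>verts G. v \<in> S \<or> nbhd G v \<inter> S \<noteq> {})"

definition gamma :: "'a graph \<Rightarrow> nat" where
  "gamma G = (LEAST k. \<exists>S. dominating_set G S \<and> card S = k)"

definition induced :: "'a graph \<Rightarrow> 'a set \<Rightarrow> 'a graph" where
  "induced G X = \<lparr>verts = X \<inter> verts G, adj = (\<lambda>u v. u \<in> X \<and> v \<in> X \<and> adj G u v)\<rparr>"

definition cart_prod :: "'a graph \<Rightarrow> 'b graph \<Rightarrow> ('a \<times> 'b) graph" where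
  "cart_prod G H = \<lparr>verts = verts G \<times> verts H,
     adj = (\<lambda>(u1, v1) (u2, v2).
        (u1 = u2 \<and> u1 \<in> verts G \<and> adj H v1 v2) \<or> (v1 = v2 \<and> v1 \<in> verts H \<and> adj G u1 u2))\<rparr>"

definition graph_iso :: "'a graph \<Rightarrow> 'b graph \<Rightarrow> bool" where
  "graph_iso G1 G2 \<longleftrightarrow> (\<exists>f. bij_betw f (verts G1) (verts G2)
     \<and> (\<forall>u\<in>verts G1. \<forall>v\<in>verts G1. adj G1 u v \<longleftrightarrow> adj G2 (f u) (f v)))"

definition kK2 :: "nat \<Rightarrow> (nat \<times> bool) graph" where
  "kK2 k = \<lparr>verts = {0..<k} \<times> UNIV,
     adj = (\<lambda>(i, a) (j, b). i = j \<and> i < k \<and> a \<noteq> b)\<rparr>"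

definition K2 :: "bool graph" where
  "K2 = \<lparr>verts = UNIV, adj = (\<lambda>a b. a \<noteq> b)\<rparr>"

definition pn :: "'a graph \<Rightarrow> 'a \<Rightarrow> 'a set \<Rightarrow> 'a set" where
  "pn G u X = {w \<in> verts G. nbhd G w \<inter> X = {u}}"

end

theory Submission
  imports Defs
begin


lemma nbhd_set_iff: "w \<in> nbhd_set G X \<longleftrightarrow> w \<in> verts G \<and> (\<exists>x\<in>X. adj G x w)"
  by (auto simp: nbhd_set_def nbhd_def)

lemma gt_le: "total_dominating_set G Y \<Longrightarrow> gamma_t G \<le> card Y"
  unfolding gamma_t_def by (rule Least_le) blast

lemma gt_attained: "total_dominating_set G Y \<Longrightarrow> \<exists>Z. total_dominating_set G Z \<and> card Z = gamma_t G"
  unfolding gamma_t_def by (rule LeastI_ex) blast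

lemma gt_ge: "(\<And>Y. total_dominating_set G Y \<Longrightarrow> k \<le> card Y) \<Longrightarrow> total_dominating_set G Y0 \<Longrightarrow> k \<le> gamma_t G"
  using gt_attained by metis

lemma g_le: "dominating_set G Y \<Longrightarrow> gamma G \<le> card Y"
  unfolding gamma_def by (rule Least_le) blast

lemma g_attained: "dominating_set G Y \<Longrightarrow> \<exists>Z. dominating_set G Z \<and> card Z = gamma G"
  unfolding gamma_def by (rule LeastI_ex) blast

lemma g_ge: "(\<And>Y. dominating_set G Y \<Longrightarrow> k \<le> card Y) \<Longrightarrow> dominating_set G Y0 \<Longrightarrow> k \<le> gamma G"
  using g_attained by metis

lemma matching_aux:
  assumes "finite A" "\<forall>u\<in>A. \<exists>v\<in>A. adj G u v" "\<forall>u v. adj G u v \<longrightarrow> adj G v u" "\<forall>u. \<not> adj G u u"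
    "\<forall>u\<in>A. \<forall>v\<in>A. \<forall>w\<in>A. adj G u v \<longrightarrow> adj G u w \<longrightarrow> v = w"
  shows "\<exists>k F. bij_betw F A ({0..<k::nat} \<times> (UNIV::bool set)) \<and>
     (\<forall>u\<in>A. \<forall>v\<in>A. adj G u v \<longleftrightarrow> fst (F u) = fst (F v) \<and> snd (F u) \<noteq> snd (F v))"
  using assms
proof (induction "card A" arbitrary: A rule: less_induct)
  case less
  show ?case
  proof (cases "A = {}")
    case True
    have "bij_betw (\<lambda>_. (0, True)) A ({0..<0::nat} \<times> (UNIV::bool set))" using True by (simp add: bij_betw_def)
    then show ?thesis using True by blast
  next
    case False
    then obtain x where x: "x \<in> A" by blast
    then obtain y where y: "y \<in> A" "adj G x y"
      using less.prems(2) by blast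
    have yu: "\<forall>v\<in>A. adj G x v \<longrightarrow> v = y" using less.prems(5) x y by blast
    have xy: "x \<noteq> y" using y less.prems(4) by blast
    have yx: "adj G y x" using y less.prems(3) by blast
    have yu2: "\<forall>v\<in>A. adj G y v \<longrightarrow> v = x" using less.prems(5) y x yx by blast
    define A' where "A' = A - {x, y}"
    have cA: "card A' < card A" unfolding A'_def using x less.prems(1)
      by (intro psubset_card_mono) auto
    have h2: "\<forall>u\<in>A'. \<exists>v\<in>A'. adj G u v"
    proof
      fix u assume u: "u \<in> A'"
      then obtain v where v: "v \<in> A" "adj G u v"
        using less.prems(2) unfolding A'_def by blast
      have "v \<noteq> x" using u v yu less.prems(3) unfolding A'_def by blast
      moreover have "v \<noteq> y" using u v yu2 less.prems(3) unfolding A'_def by blast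
      ultimately show "\<exists>v\<in>A'. adj G u v" using v unfolding A'_def by blast
    qed
    have h5: "\<forall>u\<in>A'. \<forall>v\<in>A'. \<forall>w\<in>A'. adj G u v \<longrightarrow> adj G u w \<longrightarrow> v = w"
      using less.prems(5) unfolding A'_def by blast
    have fA': "finite A'" using less.prems(1) unfolding A'_def by blast
    have "\<exists>k F. bij_betw F A' ({0..<k::nat} \<times> (UNIV::bool set)) \<and>
     (\<forall>u\<in>A'. \<forall>v\<in>A'. adj G u v \<longleftrightarrow> fst (F u) = fst (F v) \<and> snd (F u) \<noteq> snd (F v))"
      by (rule less.hyps[OF cA fA' h2 less.prems(3,4) h5])
    then obtain k :: nat and F where bF: "bij_betw F A' ({0..<k} \<times> (UNIV::bool set))"
      and aF: "\<forall>u\<in>A'. \<forall>v\<in>A'. adj G u v \<longleftrightarrow> fst (F u) = fst (F v) \<and> snd (F u) \<noteq> snd (F v)"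
      by blast
    define F2 where "F2 = F(x := (k, True), y := (k, False))"
    have F2A': "\<forall>u\<in>A'. F2 u = F u" unfolding F2_def A'_def by auto
    have Fk: "\<forall>u\<in>A'. fst (F u) < k"
    proof
      fix u assume "u \<in> A'"
      then have "F u \<in> {0..<k} \<times> (UNIV::bool set)" using bF bij_betwE by blast
      then show "fst (F u) < k" by auto
    qed
    have AA: "A = A' \<union> {x, y}" unfolding A'_def using x y by blast
    have F2x: "F2 x = (k, True)" and F2y: "F2 y = (k, False)" unfolding F2_def using xy by auto
    have F2lt: "\<forall>u\<in>A'. fst (F2 u) < k" using F2A' Fk by simp
    have "bij_betw F2 A ({0..<Suc k} \<times> (UNIV::bool set))"
    proof -
      have i1: "inj_on F2 A'" using bF F2A' unfolding bij_betw_def inj_on_def by auto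
      have "inj_on F2 A"
        unfolding inj_on_def
      proof (intro ballI impI)
        fix a b assume a: "a \<in> A" and b: "b \<in> A" and e: "F2 a = F2 b"
        have ca: "a \<in> A' \<or> a = x \<or> a = y" and cb: "b \<in> A' \<or> b = x \<or> b = y" using a b AA by auto
        show "a = b"
        proof (cases "a \<in> A' \<and> b \<in> A'")
          case True then show ?thesis using inj_onD[OF i1 e] by blast
        next
          case False
          have "fst (F2 a) = fst (F2 b)" using e by simp
          then show ?thesis using ca cb False F2lt F2x F2y e by auto
        qed
      qed
      moreover have "F2 ` A = {0..<Suc k} \<times> (UNIV::bool set)"
      proof -
        have "F2 ` A = F2 ` (A' \<union> {x, y})" using AA by (rule arg_cong)
        also have "\<dots> = F2 ` A' \<union> {F2 x, F2 y}" by (simp only: image_Un image_insert image_empty)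
        also have "F2 ` A' = F ` A'" using F2A' by (intro image_cong) auto
        also have "F ` A' = {0..<k} \<times> (UNIV::bool set)" using bF by (simp add: bij_betw_def)
        also have "{F2 x, F2 y} = {k} \<times> (UNIV::bool set)" unfolding F2x F2y UNIV_bool by blast
        also have "{0..<k} \<times> (UNIV::bool set) \<union> {k} \<times> UNIV = {0..<Suc k} \<times> UNIV" by auto
        finally show ?thesis .
      qed
      ultimately show ?thesis unfolding bij_betw_def by blast
    qed
    moreover have "\<forall>u\<in>A. \<forall>v\<in>A. adj G u v \<longleftrightarrow> fst (F2 u) = fst (F2 v) \<and> snd (F2 u) \<noteq> snd (F2 v)"
    proof (intro ballI)
      fix u v assume u: "u \<in> A" and v: "v \<in> A"
      have nx: "\<forall>w\<in>A'. \<not> adj G x w \<and> \<not> adj G w x \<and> \<not> adj G y w \<and> \<not> adj G w y"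
        using yu yu2 less.prems(3) unfolding A'_def by blast
      show "adj G u v \<longleftrightarrow> fst (F2 u) = fst (F2 v) \<and> snd (F2 u) \<noteq> snd (F2 v)"
      proof (cases "u \<in> A'")
        case True note uu = True
        show ?thesis
        proof (cases "v \<in> A'")
          case True then show ?thesis using uu aF F2A' by simp
        next
          case False
          then have "v = x \<or> v = y" using v AA by blast
          then show ?thesis using uu nx F2A' Fk xy unfolding F2_def by auto
        qed
      next
        case False
        then have uxy: "u = x \<or> u = y" using u AA by blast
        show ?thesis
        proof (cases "v \<in> A'")
          case True then show ?thesis using uxy nx F2A' Fk xy unfolding F2_def
            by (metis fun_upd_same fun_upd_other fst_conv less_irrefl)
        next
          case False
          then have "v = x \<or> v = y" using v AA by blast
          then show ?thesis using uxy xy y yx less.prems(4) unfolding F2_def by auto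
        qed
      qed
    qed
    ultimately show ?thesis by blast
  qed
qed

lemma matching_iso:
  assumes "finite A" "A \<subseteq> verts G" "\<forall>u\<in>A. \<exists>v\<in>A. adj G u v"
    "\<forall>u v. adj G u v \<longrightarrow> adj G v u" "\<forall>u. \<not> adj G u u"
    "\<forall>u\<in>A. \<forall>v\<in>A. \<forall>w\<in>A. adj G u v \<longrightarrow> adj G u w \<longrightarrow> v = w"
  shows "\<exists>k. graph_iso (induced G A) (kK2 k)"
proof -
  obtain k :: nat and F where b: "bij_betw F A ({0..<k} \<times> (UNIV::bool set))"
    and a: "\<forall>u\<in>A. \<forall>v\<in>A. adj G u v \<longleftrightarrow> fst (F u) = fst (F v) \<and> snd (F u) \<noteq> snd (F v)"
    using matching_aux[OF assms(1,3,4,5,6)] by blast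
  have v: "verts (induced G A) = A" using assms(2) unfolding induced_def by auto
  have vk: "verts (kK2 k) = {0..<k} \<times> (UNIV::bool set)" unfolding kK2_def by simp
  have "graph_iso (induced G A) (kK2 k)"
    unfolding graph_iso_def
  proof (intro exI[of _ F] conjI)
    show "bij_betw F (verts (induced G A)) (verts (kK2 k))" unfolding v vk by (rule b)
    show "\<forall>u\<in>verts (induced G A). \<forall>v\<in>verts (induced G A). adj (induced G A) u v = adj (kK2 k) (F u) (F v)"
    proof (intro ballI)
      fix u w assume "u \<in> verts (induced G A)" "w \<in> verts (induced G A)"
      then have uw: "u \<in> A" "w \<in> A" using v by auto
      obtain i c where Fu: "F u = (i, c)" by (cases "F u")
      obtain j d where Fw: "F w = (j, d)" by (cases "F w")
      have "F u \<in> {0..<k} \<times> (UNIV::bool set)" using b bij_betwE uw(1) by blast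
      then have ik: "i < k" using Fu by simp
      have e1: "adj (induced G A) u w = adj G u w" using uw unfolding induced_def by simp
      have e2: "adj (kK2 k) (F u) (F w) = (i = j \<and> i < k \<and> c \<noteq> d)" unfolding Fu Fw kK2_def by simp
      show "adj (induced G A) u w = adj (kK2 k) (F u) (F w)"
        unfolding e1 e2 using a uw Fu Fw ik by auto
    qed
  qed
  then show ?thesis by blast
qed



locale P3 =
  fixes G :: "'a graph" and H :: "'b graph" and D :: "('a \<times> 'b) set"
  assumes sG: "simple_graph G" and sH: "simple_graph H"
    and cH: "connected_graph H" and nG: "no_isolated G" and nH: "no_isolated H"
    and eqg: "gamma_t G = gamma_t (cart_prod G H)"
    and tD: "total_dominating_set (cart_prod G H) D"
    and cD: "card D = gamma_t (cart_prod G H)"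
begin

definition colD :: "'a \<Rightarrow> 'b set" where "colD g = {h. (g, h) \<in> D}"
definition Sx :: "'a set" where "Sx = fst ` D"
definition S1x :: "'a set" where "S1x = {g. \<exists>h1 h2. h1 \<noteq> h2 \<and> (g, h1) \<in> D \<and> (g, h2) \<in> D}"
definition S2x :: "'a set" where "S2x = {g. \<exists>h. colD g = {h}}"
definition Six :: "'b \<Rightarrow> 'a set" where "Six hi = {g. colD g = {hi}}"
definition f0 :: "'a \<Rightarrow> 'a" where "f0 g = (SOME w. adj G g w)"

lemma finG: "finite (verts G)" using sG unfolding simple_graph_def by blast
lemma finH: "finite (verts H)" using sH unfolding simple_graph_def by blast
lemma symG: "adj G u v \<Longrightarrow> adj G v u" using sG unfolding simple_graph_def by blast
lemma symH: "adj H u v \<Longrightarrow> adj H v u" using sH unfolding simple_graph_def by blast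
lemma irrG: "\<not> adj G u u" using sG unfolding simple_graph_def by blast
lemma irrH: "\<not> adj H u u" using sH unfolding simple_graph_def by blast
lemma adjG: "adj G u v \<Longrightarrow> u \<in> verts G \<and> v \<in> verts G" using sG unfolding simple_graph_def by blast
lemma adjH: "adj H u v \<Longrightarrow> u \<in> verts H \<and> v \<in> verts H" using sH unfolding simple_graph_def by blast

lemma Dsub: "D \<subseteq> verts G \<times> verts H"
  using tD unfolding total_dominating_set_def cart_prod_def by simp
lemma finD: "finite D" using Dsub finG finH finite_subset by blast
lemma colH: "colD g \<subseteq> verts H" using Dsub unfolding colD_def by blast
lemma fincol: "finite (colD g)" using colH finH finite_subset by blast
lemma S_col: "g \<in> Sx \<longleftrightarrow> colD g \<noteq> {}" unfolding Sx_def colD_def by force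
lemma SV: "Sx \<subseteq> verts G" using Dsub unfolding Sx_def by force
lemma finS: "finite Sx" using SV finG finite_subset by blast

lemma Hne: "\<exists>h. h \<in> verts H" using cH unfolding connected_graph_def by blast
lemma Hother: "\<exists>h\<in>verts H. h \<noteq> hi"
proof (cases "hi \<in> verts H")
  case True
  then have "nbhd H hi \<noteq> {}" using nH unfolding no_isolated_def by blast
  then obtain h where "h \<in> verts H" "adj H hi h" unfolding nbhd_def by blast
  then show ?thesis using irrH by metis
next
  case False
  obtain h where "h \<in> verts H" using Hne by blast
  then show ?thesis using False by (intro bexI[of _ h]) auto
qed

lemma G_nbr: "g \<in> verts G \<Longrightarrow> \<exists>w. adj G g w"
  using nG unfolding no_isolated_def nbhd_def by blast
lemma f0_adj: "g \<in> verts G \<Longrightarrow> adj G g (f0 g)"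
  unfolding f0_def by (rule someI_ex[OF G_nbr])

lemma S1_iff: "g \<in> S1x \<longleftrightarrow> (\<exists>h1\<in>colD g. \<exists>h2\<in>colD g. h1 \<noteq> h2)"
  unfolding S1x_def colD_def by blast
lemma S2_S: "S2x \<subseteq> Sx" unfolding S2x_def using S_col by blast
lemma S1_S: "S1x \<subseteq> Sx" unfolding S1x_def Sx_def by force
lemma S_split: "Sx = S1x \<union> S2x"
proof
  show "Sx \<subseteq> S1x \<union> S2x"
  proof
    fix g assume "g \<in> Sx"
    then obtain h where h: "h \<in> colD g" using S_col by blast
    show "g \<in> S1x \<union> S2x"
    proof (cases "\<exists>h'\<in>colD g. h' \<noteq> h")
      case True then show ?thesis using h S1_iff by blast
    next
      case False then have "colD g = {h}" using h by blast
      then show ?thesis unfolding S2x_def by blast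
    qed
  qed
  show "S1x \<union> S2x \<subseteq> Sx" using S1_S S2_S by blast
qed
lemma S12: "S1x \<inter> S2x = {}" unfolding S2x_def using S1_iff by fastforce
lemma finS1: "finite S1x" using S1_S finS finite_subset by blast
lemma finS2: "finite S2x" using S2_S finS finite_subset by blast
lemma cardS: "card Sx = card S1x + card S2x"
  using card_Un_disjoint[OF finS1 finS2 S12] S_split by simp
lemma S1V: "S1x \<subseteq> verts G" using S1_S SV by blast
lemma S2V: "S2x \<subseteq> verts G" using S2_S SV by blast
lemma Si_S2: "Six hi \<subseteq> S2x" unfolding Six_def S2x_def by blast
lemma notS_col: "g \<notin> Sx \<Longrightarrow> colD g = {}" using S_col by blast

lemma dom:
  assumes "v \<in> verts G" "h \<in> verts H"
  shows "(\<exists>y\<in>colD v. adj H y h) \<or> (\<exists>x. (x, h) \<in> D \<and> adj G x v)"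
proof -
  have "(v, h) \<in> nbhd_set (cart_prod G H) D"
    using tD assms unfolding total_dominating_set_def cart_prod_def by simp
  then obtain p where p: "p \<in> D" "adj (cart_prod G H) p (v, h)"
    unfolding nbhd_set_iff by blast
  obtain x y where "p = (x, y)" by (cases p)
  then show ?thesis using p unfolding cart_prod_def colD_def by auto
qed

lemma count_sum: "(\<Sum>g\<in>S1x. card (colD g)) + card S2x \<le> card D"
proof -
  define D2 where "D2 = {p \<in> D. fst p \<in> S2x}"
  have sub1: "Sigma S1x colD \<subseteq> D" by (auto simp: colD_def)
  have sub2: "D2 \<subseteq> D" unfolding D2_def by blast
  have disj: "Sigma S1x colD \<inter> D2 = {}"
  proof -
    { fix p assume "p \<in> Sigma S1x colD" "p \<in> D2"
      then have "fst p \<in> S1x" "fst p \<in> S2x" unfolding D2_def by auto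
      then have False using S12 by blast }
    then show ?thesis by blast
  qed
  have c1: "card (Sigma S1x colD) = (\<Sum>g\<in>S1x. card (colD g))"
    using finS1 fincol by simp
  have inj: "inj_on fst D2"
  proof (rule inj_onI)
    fix p q assume p: "p \<in> D2" and q: "q \<in> D2" and e: "fst p = fst q"
    obtain g h where pgh: "p = (g, h)" by (cases p)
    obtain g' h' where qgh: "q = (g', h')" by (cases q)
    have gg: "g' = g" using e pgh qgh by simp
    have "g \<in> S2x" "(g, h) \<in> D" "(g, h') \<in> D" using p q pgh qgh gg unfolding D2_def by auto
    then obtain h0 where "colD g = {h0}" "h \<in> colD g" "h' \<in> colD g"
      unfolding S2x_def colD_def by blast
    then show "p = q" using pgh qgh gg by auto
  qed
  have img: "fst ` D2 = S2x"
  proof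
    show "fst ` D2 \<subseteq> S2x" unfolding D2_def by blast
    show "S2x \<subseteq> fst ` D2"
    proof
      fix g assume g: "g \<in> S2x"
      then obtain h where "colD g = {h}" unfolding S2x_def by blast
      then have "(g, h) \<in> D2" unfolding D2_def colD_def using g by auto
      then show "g \<in> fst ` D2" by force
    qed
  qed
  have c2: "card D2 = card S2x" using card_image[OF inj] img by simp
  have "card (Sigma S1x colD \<union> D2) \<le> card D"
    using sub1 sub2 finD by (intro card_mono) auto
  moreover have "card (Sigma S1x colD \<union> D2) = card (Sigma S1x colD) + card D2"
  proof (rule card_Un_disjoint)
    show "finite (Sigma S1x colD)" using rev_finite_subset[OF finD sub1] .
    show "finite D2" using rev_finite_subset[OF finD sub2] .
    show "Sigma S1x colD \<inter> D2 = {}" by (rule disj)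
  qed
  ultimately show ?thesis using c1 c2 by simp
qed

lemma col2: "g \<in> S1x \<Longrightarrow> 2 \<le> card (colD g)"
proof -
  assume "g \<in> S1x"
  then obtain h1 h2 where "h1 \<in> colD g" "h2 \<in> colD g" "h1 \<noteq> h2" using S1_iff by blast
  then have "card {h1, h2} \<le> card (colD g)" using fincol by (intro card_mono) auto
  then show ?thesis using \<open>h1 \<noteq> h2\<close> by simp
qed

lemma count: "2 * card S1x + card S2x \<le> card D"
proof -
  have "(\<Sum>g\<in>S1x. 2) \<le> (\<Sum>g\<in>S1x. card (colD g))" using col2 by (intro sum_mono) auto
  then show ?thesis using count_sum by simp
qed

lemma count_u: "u \<in> S1x \<Longrightarrow> card (colD u) + 2 * card S1x + card S2x \<le> card D + 2"
proof -
  assume u: "u \<in> S1x"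
  have "(\<Sum>g\<in>S1x - {u}. 2) \<le> (\<Sum>g\<in>S1x - {u}. card (colD g))" using col2 by (intro sum_mono) auto
  moreover have "(\<Sum>g\<in>S1x. card (colD g)) = card (colD u) + (\<Sum>g\<in>S1x - {u}. card (colD g))"
    using sum.remove[OF finS1 u] .
  moreover have "(\<Sum>g\<in>S1x - {u}. (2::nat)) = 2 * (card S1x - 1)" using u finS1 by simp
  moreover have "card S1x \<ge> 1" using u finS1 card_0_eq by fastforce
  ultimately show ?thesis using count_sum by simp
qed

lemma gt_D: "gamma_t G = card D" using eqg cD by simp

lemma F3:
  assumes "v \<in> verts G" "v \<notin> S1x"
  shows "\<exists>x\<in>Sx. adj G x v"
proof (cases "v \<in> Sx")
  case False
  obtain h where h: "h \<in> verts H" using Hne by blast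
  from dom[OF assms(1) h] notS_col[OF False] obtain x where "(x, h) \<in> D" "adj G x v" by blast
  then show ?thesis unfolding Sx_def by force
next
  case True
  then have "v \<in> S2x" using S_split assms(2) by blast
  then obtain h where h: "colD v = {h}" unfolding S2x_def by blast
  then have hH: "h \<in> verts H" using colH by blast
  from dom[OF assms(1) hH] h irrH obtain x where "(x, h) \<in> D" "adj G x v" by auto
  then show ?thesis unfolding Sx_def by force
qed

lemma Si_dom:
  assumes "v \<in> Six hi"
  shows "\<exists>x. (x, hi) \<in> D \<and> adj G x v"
proof -
  have h: "colD v = {hi}" using assms unfolding Six_def by blast
  then have hH: "hi \<in> verts H" using colH by blast
  have "v \<in> verts G" using assms Si_S2 S2V by blast
  from dom[OF this hH] h irrH show ?thesis by auto
qed

lemma UB: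
  assumes "T \<subseteq> verts G" "\<forall>s\<in>S1x. \<exists>t\<in>T. adj G t s"
  shows "total_dominating_set G (Sx \<union> T)"
  unfolding total_dominating_set_def
proof
  show "Sx \<union> T \<subseteq> verts G" using SV assms(1) by blast
  show "nbhd_set G (Sx \<union> T) = verts G"
  proof
    show "nbhd_set G (Sx \<union> T) \<subseteq> verts G" by (auto simp: nbhd_set_iff)
    show "verts G \<subseteq> nbhd_set G (Sx \<union> T)"
    proof
      fix v assume v: "v \<in> verts G"
      show "v \<in> nbhd_set G (Sx \<union> T)"
      proof (cases "v \<in> S1x")
        case True then show ?thesis using assms(2) v unfolding nbhd_set_iff by blast
      next
        case False then show ?thesis using F3[OF v] v unfolding nbhd_set_iff by blast
      qed
    qed
  qed
qed

lemma KEYT: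
  assumes "T \<subseteq> verts G" "\<forall>s\<in>S1x. \<exists>t\<in>T. adj G t s" "card T \<le> card S1x"
  shows "card T = card S1x \<and> Sx \<inter> T = {} \<and> card (Sx \<union> T) = gamma_t G
     \<and> gamma_t G = 2 * card S1x + card S2x"
proof -
  have fT: "finite T" using assms(1) finG finite_subset by blast
  have a: "gamma_t G \<le> card (Sx \<union> T)" using gt_le UB[OF assms(1,2)] by blast
  have b: "card (Sx \<union> T) + card (Sx \<inter> T) = card Sx + card T" using card_Un_Int[OF finS fT] by simp
  have "card Sx + card T \<le> gamma_t G" using cardS count gt_D assms(3) by simp
  then have "card (Sx \<inter> T) = 0" "card T = card S1x" "card (Sx \<union> T) = gamma_t G"
    "gamma_t G = 2 * card S1x + card S2x"
    using a b cardS count gt_D assms(3) by linarith+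
  moreover have "Sx \<inter> T = {}" using \<open>card (Sx \<inter> T) = 0\<close> fT by simp
  ultimately show ?thesis by blast
qed

lemma T0: "f0 ` S1x \<subseteq> verts G \<and> (\<forall>s\<in>S1x. \<exists>t\<in>f0 ` S1x. adj G t s) \<and> card (f0 ` S1x) \<le> card S1x"
proof (intro conjI)
  show "f0 ` S1x \<subseteq> verts G"
  proof
    fix t assume "t \<in> f0 ` S1x"
    then obtain s where s: "s \<in> S1x" "t = f0 s" by blast
    then have "adj G s t" using f0_adj S1V by blast
    then show "t \<in> verts G" using adjG by blast
  qed
  show "\<forall>s\<in>S1x. \<exists>t\<in>f0 ` S1x. adj G t s"
  proof
    fix s assume s: "s \<in> S1x"
    then have "adj G (f0 s) s" using f0_adj S1V symG by blast
    then show "\<exists>t\<in>f0 ` S1x. adj G t s" using s by blast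
  qed
  show "card (f0 ` S1x) \<le> card S1x" using card_image_le finS1 by blast
qed

lemma gt_eq: "gamma_t G = 2 * card S1x + card S2x"
  using KEYT T0 by blast

lemma KEYF:
  assumes "\<forall>u\<in>S1x. adj G u (f u)"
  shows "inj_on f S1x \<and> f ` S1x \<inter> Sx = {} \<and> total_dominating_set G (Sx \<union> f ` S1x)
     \<and> card (Sx \<union> f ` S1x) = gamma_t G"
proof -
  have 1: "f ` S1x \<subseteq> verts G" using assms adjG by blast
  have 2: "\<forall>s\<in>S1x. \<exists>t\<in>f ` S1x. adj G t s" using assms symG by blast
  have 3: "card (f ` S1x) \<le> card S1x" using card_image_le finS1 by blast
  from KEYT[OF 1 2 3] have k: "card (f ` S1x) = card S1x" "Sx \<inter> f ` S1x = {}" "card (Sx \<union> f ` S1x) = gamma_t G"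
    by auto
  have "inj_on f S1x" using eq_card_imp_inj_on[OF finS1 k(1)] .
  then show ?thesis using k UB[OF 1 2] by blast
qed

lemma C1: "u \<in> S1x \<Longrightarrow> v \<in> Sx \<Longrightarrow> \<not> adj G u v"
proof
  assume u: "u \<in> S1x" and v: "v \<in> Sx" and a: "adj G u v"
  define f where "f = f0(u := v)"
  have "\<forall>x\<in>S1x. adj G x (f x)" unfolding f_def using a f0_adj S1V by auto
  from KEYF[OF this] have "f ` S1x \<inter> Sx = {}" by blast
  moreover have "f u = v" unfolding f_def by simp
  ultimately show False using u v by blast
qed

lemma C2: "u \<in> S1x \<Longrightarrow> v \<in> S1x \<Longrightarrow> u \<noteq> v \<Longrightarrow> adj G u w \<Longrightarrow> adj G v w \<Longrightarrow> False"
proof -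
  assume u: "u \<in> S1x" and v: "v \<in> S1x" and uv: "u \<noteq> v" and a: "adj G u w" and b: "adj G v w"
  define f where "f = f0(u := w, v := w)"
  have "\<forall>x\<in>S1x. adj G x (f x)" unfolding f_def using a b f0_adj S1V by auto
  from KEYF[OF this] have "inj_on f S1x" by blast
  moreover have "f u = w" "f v = w" unfolding f_def using uv by auto
  ultimately show False using u v uv inj_onD by metis
qed

end


context P3 begin

definition minTDS :: "'a set \<Rightarrow> bool" where
  "minTDS X \<longleftrightarrow> total_dominating_set G X \<and> card X = gamma_t G"

lemma minTDS_V: "minTDS X \<Longrightarrow> X \<subseteq> verts G"
  unfolding minTDS_def total_dominating_set_def by blast
lemma minTDS_fin: "minTDS X \<Longrightarrow> finite X"
  using minTDS_V finG rev_finite_subset by metis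
lemma minTDS_dom: "minTDS X \<Longrightarrow> y \<in> verts G \<Longrightarrow> \<exists>x\<in>X. adj G y x"
proof -
  assume m: "minTDS X" and y: "y \<in> verts G"
  then have "y \<in> nbhd_set G X" unfolding minTDS_def total_dominating_set_def by blast
  then obtain x where "x \<in> X" "adj G x y" unfolding nbhd_set_iff by blast
  then show ?thesis using symG by blast
qed

lemma L2:
  assumes m: "minTDS X" and x: "x \<in> X"
  shows "\<exists>w\<in>verts G. adj G w x \<and> (\<forall>y\<in>X. adj G w y \<longrightarrow> y = x)"
proof (rule ccontr)
  assume na: "\<not> ?thesis"
  have fX: "finite X" using minTDS_fin[OF m] .
  have "total_dominating_set G (X - {x})"
    unfolding total_dominating_set_def
  proof
    show "X - {x} \<subseteq> verts G" using minTDS_V[OF m] by blast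
    show "nbhd_set G (X - {x}) = verts G"
    proof
      show "nbhd_set G (X - {x}) \<subseteq> verts G" by (auto simp: nbhd_set_iff)
      show "verts G \<subseteq> nbhd_set G (X - {x})"
      proof
        fix v assume v: "v \<in> verts G"
        obtain y where y: "y \<in> X" "adj G v y" using minTDS_dom[OF m v] by blast
        show "v \<in> nbhd_set G (X - {x})"
        proof (cases "\<exists>z\<in>X. z \<noteq> x \<and> adj G v z")
          case True
          then obtain z where "z \<in> X" "z \<noteq> x" "adj G v z" by blast
          then show ?thesis using v symG unfolding nbhd_set_iff by blast
        next
          case False
          then have "y = x" using y by blast
          then have "adj G v x \<and> (\<forall>z\<in>X. adj G v z \<longrightarrow> z = x)" using y False by blast
          then show ?thesis using na v by blast
        qed
      qed
    qed
  qed
  then have "gamma_t G \<le> card (X - {x})" by (rule gt_le)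
  moreover have "card (X - {x}) < card X"
  proof -
    have "card X > 0" using fX x card_gt_0_iff by blast
    then show ?thesis using fX x by simp
  qed
  ultimately show False using m unfolding minTDS_def by simp
qed

lemma L3:
  assumes m: "minTDS X" and SX: "Sx \<subseteq> X" and g: "g \<in> S2x" and w: "w \<in> verts G"
    and a: "adj G w g" and u: "\<forall>y\<in>X. adj G w y \<longrightarrow> y = g"
  shows "w \<in> S2x"
proof -
  have gS: "g \<in> Sx" using g S2_S by blast
  have "w \<notin> S1x" using C1 gS a by blast
  moreover have "w \<in> Sx"
  proof (rule ccontr)
    assume wS: "w \<notin> Sx"
    obtain hg where hg: "colD g = {hg}" using g unfolding S2x_def by blast
    obtain h where h: "h \<in> verts H" "h \<noteq> hg" using Hother by blast
    from dom[OF w h(1)] notS_col[OF wS] obtain x where x: "(x, h) \<in> D" "adj G x w" by blast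
    have "x \<in> Sx" using x(1) unfolding Sx_def by force
    then have "x = g" using u SX x(2) symG by blast
    then have "h \<in> colD g" using x(1) unfolding colD_def by blast
    then show False using hg h(2) by blast
  qed
  ultimately show ?thesis using S_split by blast
qed

lemma L4:
  assumes m: "minTDS X" and SX: "Sx \<subseteq> X" and w: "w \<in> S2x"
  shows "\<exists>g\<in>S2x. adj G w g \<and> (\<forall>y\<in>X. adj G w y \<longrightarrow> y = g)"
proof -
  define P where "P g w \<longleftrightarrow> w \<in> S2x \<and> adj G w g \<and> (\<forall>y\<in>X. adj G w y \<longrightarrow> y = g)" for g w
  have ex: "\<exists>w. P g w" if g: "g \<in> S2x" for g
  proof -
    have "g \<in> X" using g S2_S SX by blast
    then obtain w where w: "w \<in> verts G" "adj G w g" "\<forall>y\<in>X. adj G w y \<longrightarrow> y = g"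
      using L2[OF m] by blast
    then have "w \<in> S2x" using L3[OF m SX g] by blast
    then show ?thesis using w unfolding P_def by blast
  qed
  define phi where "phi g = (SOME w. P g w)" for g
  have phiP: "P g (phi g)" if "g \<in> S2x" for g
    unfolding phi_def using ex[OF that] by (rule someI_ex)
  have sub: "phi ` S2x \<subseteq> S2x" using phiP unfolding P_def by blast
  have inj: "inj_on phi S2x"
  proof (rule inj_onI)
    fix g1 g2 assume g1: "g1 \<in> S2x" and g2: "g2 \<in> S2x" and e: "phi g1 = phi g2"
    have "g1 \<in> X" using g1 S2_S SX by blast
    moreover have "adj G (phi g2) g1" using phiP[OF g1] e unfolding P_def by simp
    ultimately show "g1 = g2" using phiP[OF g2] unfolding P_def by blast
  qed
  have "phi ` S2x = S2x" using endo_inj_surj[OF finS2 sub inj] .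
  then obtain g where g: "g \<in> S2x" "w = phi g" using w by (metis imageE)
  then show ?thesis using phiP[OF g(1)] unfolding P_def by blast
qed

definition X0 :: "'a set" where "X0 = Sx \<union> f0 ` S1x"

lemma X0_min: "minTDS X0"
proof -
  have "\<forall>u\<in>S1x. adj G u (f0 u)" using f0_adj S1V by blast
  then show ?thesis using KEYF unfolding minTDS_def X0_def by blast
qed
lemma S_X0: "Sx \<subseteq> X0" unfolding X0_def by blast

definition pt :: "'a \<Rightarrow> 'a" where "pt w = (SOME g. g \<in> S2x \<and> adj G w g)"

lemma P1: "w \<in> S2x \<Longrightarrow> \<exists>g\<in>S2x. adj G w g" using L4[OF X0_min S_X0] by blast
lemma P1u: "w \<in> S2x \<Longrightarrow> g1 \<in> S2x \<Longrightarrow> g2 \<in> S2x \<Longrightarrow> adj G w g1 \<Longrightarrow> adj G w g2 \<Longrightarrow> g1 = g2"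
proof -
  assume w: "w \<in> S2x" and g: "g1 \<in> S2x" "g2 \<in> S2x" "adj G w g1" "adj G w g2"
  obtain g where "\<forall>y\<in>X0. adj G w y \<longrightarrow> y = g" using L4[OF X0_min S_X0 w] by blast
  moreover have "g1 \<in> X0" "g2 \<in> X0" using g S2_S S_X0 by blast+
  ultimately show ?thesis using g by blast
qed
lemma pt: "w \<in> S2x \<Longrightarrow> pt w \<in> S2x \<and> adj G w (pt w)"
  unfolding pt_def using P1 by (metis (mono_tags, lifting) someI_ex)
lemma pt_uniq: "w \<in> S2x \<Longrightarrow> g \<in> S2x \<Longrightarrow> adj G w g \<Longrightarrow> g = pt w"
  using pt P1u by blast
lemma pt_pt: "w \<in> S2x \<Longrightarrow> pt (pt w) = w"
proof -
  assume w: "w \<in> S2x"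
  have "pt w \<in> S2x" "adj G (pt w) w" using pt[OF w] symG by auto
  then show ?thesis using pt_uniq w by metis
qed

lemma L4X: "minTDS X \<Longrightarrow> Sx \<subseteq> X \<Longrightarrow> w \<in> S2x \<Longrightarrow> y \<in> X \<Longrightarrow> adj G w y \<Longrightarrow> y = pt w"
proof -
  assume m: "minTDS X" and SX: "Sx \<subseteq> X" and w: "w \<in> S2x" and y: "y \<in> X" "adj G w y"
  obtain g where g: "g \<in> S2x" "adj G w g" "\<forall>y\<in>X. adj G w y \<longrightarrow> y = g" using L4[OF m SX w] by blast
  have "g = pt w" using pt_uniq[OF w g(1,2)] .
  then show ?thesis using g y by blast
qed

lemma Si_pt: "w \<in> Six hi \<Longrightarrow> pt w \<in> Six hi"
proof -
  assume w: "w \<in> Six hi"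
  obtain x where x: "(x, hi) \<in> D" "adj G x w" using Si_dom[OF w] by blast
  have xS: "x \<in> Sx" using x(1) unfolding Sx_def by force
  have wS: "w \<in> Sx" "w \<in> S2x" using w Si_S2 S2_S by blast+
  have "x \<notin> S1x" using C1 wS x(2) by blast
  then have xS2: "x \<in> S2x" using xS S_split by blast
  then obtain h0 where "colD x = {h0}" unfolding S2x_def by blast
  moreover have "hi \<in> colD x" using x(1) unfolding colD_def by blast
  ultimately have "colD x = {hi}" by auto
  then have "x \<in> Six hi" unfolding Six_def by blast
  moreover have "x = pt w" using pt_uniq[OF wS(2) xS2] x(2) symG by blast
  ultimately show ?thesis by simp
qed

lemma partE: "\<exists>k. graph_iso (induced G S2x) (kK2 k)"
proof (rule matching_iso[OF finS2 S2V])
  show "\<forall>u\<in>S2x. \<exists>v\<in>S2x. adj G u v" using P1 by blast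
  show "\<forall>u v. adj G u v \<longrightarrow> adj G v u" using symG by blast
  show "\<forall>u. \<not> adj G u u" using irrG by blast
  show "\<forall>u\<in>S2x. \<forall>v\<in>S2x. \<forall>w\<in>S2x. adj G u v \<longrightarrow> adj G u w \<longrightarrow> v = w" using P1u by blast
qed

lemma partF: "\<exists>k. graph_iso (induced G (Six hi)) (kK2 k)"
proof (rule matching_iso)
  show "finite (Six hi)" using finS2 Si_S2 rev_finite_subset by metis
  show "Six hi \<subseteq> verts G" using Si_S2 S2V by blast
  show "\<forall>u\<in>Six hi. \<exists>v\<in>Six hi. adj G u v" using Si_pt pt Si_S2 by blast
  show "\<forall>u v. adj G u v \<longrightarrow> adj G v u" using symG by blast
  show "\<forall>u. \<not> adj G u u" using irrG by blast
  show "\<forall>u\<in>Six hi. \<forall>v\<in>Six hi. \<forall>w\<in>Six hi. adj G u v \<longrightarrow> adj G u w \<longrightarrow> v = w"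
    using P1u Si_S2 by blast
qed

lemma partI: "u \<in> S1x \<Longrightarrow> v \<in> S2x \<Longrightarrow> adj G u w \<Longrightarrow> adj G v w \<Longrightarrow> False"
proof -
  assume u: "u \<in> S1x" and v: "v \<in> S2x" and a: "adj G u w" and b: "adj G v w"
  define f where "f = f0(u := w)"
  have "\<forall>x\<in>S1x. adj G x (f x)" unfolding f_def using a f0_adj S1V by auto
  from KEYF[OF this] have m: "minTDS (Sx \<union> f ` S1x)" unfolding minTDS_def by blast
  have wX: "w \<in> Sx \<union> f ` S1x" using u unfolding f_def by auto
  have "w = pt v" using L4X[OF m _ v wX b] by blast
  then have "w \<in> Sx" using pt[OF v] S2_S by auto
  then show False using C1 u a by blast
qed

end


lemma ind_verts: "W \<subseteq> verts G \<Longrightarrow> verts (induced G W) = W"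
  unfolding induced_def by auto
lemma ind_adj: "adj (induced G W) u v = (u \<in> W \<and> v \<in> W \<and> adj G u v)"
  unfolding induced_def by simp
lemma tds_ind:
  assumes "W \<subseteq> verts G"
  shows "total_dominating_set (induced G W) Y \<longleftrightarrow> Y \<subseteq> W \<and> (\<forall>w\<in>W. \<exists>y\<in>Y. adj G y w)"
proof -
  have v: "verts (induced G W) = W" using ind_verts[OF assms] .
  have ns: "nbhd_set (induced G W) Y = {w\<in>W. \<exists>y\<in>Y. y \<in> W \<and> adj G y w}"
    by (auto simp: nbhd_set_iff v ind_adj)
  show ?thesis
  proof
    assume "total_dominating_set (induced G W) Y"
    then have "Y \<subseteq> W" "{w\<in>W. \<exists>y\<in>Y. y \<in> W \<and> adj G y w} = W"
      unfolding total_dominating_set_def v ns by auto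
    then show "Y \<subseteq> W \<and> (\<forall>w\<in>W. \<exists>y\<in>Y. adj G y w)" by blast
  next
    assume a: "Y \<subseteq> W \<and> (\<forall>w\<in>W. \<exists>y\<in>Y. adj G y w)"
    then have "{w\<in>W. \<exists>y\<in>Y. y \<in> W \<and> adj G y w} = W" by blast
    then show "total_dominating_set (induced G W) Y"
      unfolding total_dominating_set_def v ns using a by blast
  qed
qed
lemma ds_ind:
  assumes "W \<subseteq> verts G"
  shows "dominating_set (induced G W) Y \<longleftrightarrow> Y \<subseteq> W \<and> (\<forall>v\<in>W. v \<in> Y \<or> (\<exists>y\<in>Y. adj G v y))"
proof -
  have v: "verts (induced G W) = W" using ind_verts[OF assms] .
  show ?thesis
    unfolding dominating_set_def v nbhd_def
    by (auto simp: v ind_adj)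
qed

context P3 begin

lemma L5:
  assumes m: "minTDS X" and SX: "Sx \<subseteq> X" and y: "y \<in> verts G" and yS: "y \<notin> Sx"
    and a: "\<forall>x\<in>X. adj G y x \<longrightarrow> x \<in> Six hi"
  shows False
proof -
  obtain h where h: "h \<in> verts H" "h \<noteq> hi" using Hother by blast
  from dom[OF y h(1)] notS_col[OF yS] obtain x where x: "(x, h) \<in> D" "adj G x y" by blast
  have "x \<in> Sx" using x(1) unfolding Sx_def by force
  then have "x \<in> Six hi" using a SX x(2) symG by blast
  then have "colD x = {hi}" unfolding Six_def by blast
  moreover have "h \<in> colD x" using x(1) unfolding colD_def by blast
  ultimately show False using h(2) by blast
qed

lemma partH:
  assumes u: "u \<in> Six hi" and v: "v \<in> Six hi" and uv: "u \<noteq> v" and a: "adj G u w" and b: "adj G v w"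
  shows False
proof -
  have uS: "u \<in> S2x" and vS: "v \<in> S2x" using u v Si_S2 by blast+
  define u' where "u' = pt u"
  define v' where "v' = pt v"
  have u'S: "u' \<in> Six hi" and v'S: "v' \<in> Six hi" using Si_pt u v unfolding u'_def v'_def by blast+
  have u'2: "u' \<in> S2x" and v'2: "v' \<in> S2x" using u'S v'S Si_S2 by blast+
  have uv': "u' \<noteq> v'" using pt_pt uS vS uv unfolding u'_def v'_def by metis
  have u'X: "u' \<in> X0" and v'X: "v' \<in> X0" using u'2 v'2 S2_S S_X0 by blast+
  have wV: "w \<in> verts G" using a adjG by blast
  define X3 where "X3 = insert w (X0 - {u', v'})"
  have tds: "total_dominating_set G X3"
    unfolding total_dominating_set_def
  proof
    show "X3 \<subseteq> verts G" unfolding X3_def using minTDS_V[OF X0_min] wV by blast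
    show "nbhd_set G X3 = verts G"
    proof
      show "nbhd_set G X3 \<subseteq> verts G" by (auto simp: nbhd_set_iff)
      show "verts G \<subseteq> nbhd_set G X3"
      proof
        fix y assume y: "y \<in> verts G"
        show "y \<in> nbhd_set G X3"
        proof (cases "\<exists>z\<in>X0 - {u', v'}. adj G y z")
          case True
          then obtain z where "z \<in> X0 - {u', v'}" "adj G y z" by blast
          then show ?thesis using y symG unfolding nbhd_set_iff X3_def by blast
        next
          case False
          then have all: "\<forall>x\<in>X0. adj G y x \<longrightarrow> x \<in> {u', v'}" by blast
          have "y \<in> {u, v}"
          proof (cases "y \<in> Sx")
            case False
            have "\<forall>x\<in>X0. adj G y x \<longrightarrow> x \<in> Six hi" using all u'S v'S by blast
            then show ?thesis using L5[OF X0_min S_X0 y False] by blast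
          next
            case True
            show ?thesis
            proof (cases "y \<in> S1x")
              case True
              obtain x where x: "x \<in> X0" "adj G y x" using minTDS_dom[OF X0_min y] by blast
              then have "x \<in> Sx" using all u'2 v'2 S2_S by blast
              then show ?thesis using C1 True x(2) by blast
            next
              case False
              then have y2: "y \<in> S2x" using \<open>y \<in> Sx\<close> S_split by blast
              have "pt y \<in> X0" using pt[OF y2] S2_S S_X0 by blast
              then have "pt y \<in> {u', v'}" using all pt[OF y2] by blast
              then have "pt (pt y) \<in> {pt u', pt v'}" by blast
              then show ?thesis using pt_pt y2 uS vS unfolding u'_def v'_def by auto
            qed
          qed
          then have "adj G w y" using a b symG by blast
          then show ?thesis using y unfolding nbhd_set_iff X3_def by blast
        qed
      qed
    qed
  qed
  have fX: "finite X0" using minTDS_fin[OF X0_min] .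
  have c1: "card (X0 - {u', v'}) = card X0 - 2"
    using card_Diff_subset[of "{u', v'}" X0] u'X v'X uv' by simp
  have "card {u', v'} \<le> card X0" using u'X v'X fX by (intro card_mono) auto
  then have c2: "card X0 \<ge> 2" using uv' by simp
  have "card X3 \<le> Suc (card (X0 - {u', v'}))" unfolding X3_def using fX by (simp add: card_insert_if)
  then have "card X3 < card X0" using c1 c2 by simp
  moreover have "gamma_t G \<le> card X3" using gt_le tds by blast
  ultimately show False using X0_min unfolding minTDS_def by simp
qed

end


context P3 begin

lemma partG:
  assumes hi: "hi \<in> verts H"
  shows "(nbhd_set G S2x - S2x) \<union> Six hi \<subseteq> nbhd_set G (Six hi)"
proof
  fix p assume p: "p \<in> (nbhd_set G S2x - S2x) \<union> Six hi"
  show "p \<in> nbhd_set G (Six hi)"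
  proof (cases "p \<in> Six hi")
    case True
    then have "pt p \<in> Six hi" "adj G p (pt p)" using Si_pt pt Si_S2 by blast+
    moreover have "p \<in> verts G" using True Si_S2 S2V by blast
    ultimately show ?thesis using symG unfolding nbhd_set_iff by blast
  next
    case False
    then have p1: "p \<in> nbhd_set G S2x" "p \<notin> S2x" using p by blast+
    then obtain s where s: "s \<in> S2x" "adj G s p" and pV: "p \<in> verts G" unfolding nbhd_set_iff by blast
    have "p \<notin> S1x" using C1 s S2_S symG by blast
    then have pS: "p \<notin> Sx" using p1(2) S_split by blast
    from dom[OF pV hi] notS_col[OF pS] obtain x where x: "(x, hi) \<in> D" "adj G x p" by blast
    have xS: "x \<in> Sx" using x(1) unfolding Sx_def by force
    have "x \<notin> S1x" using partI s x(2) by blast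
    then have xS2: "x \<in> S2x" using xS S_split by blast
    then obtain h0 where "colD x = {h0}" unfolding S2x_def by blast
    moreover have "hi \<in> colD x" using x(1) unfolding colD_def by blast
    ultimately have "colD x = {hi}" by auto
    then have "x \<in> Six hi" unfolding Six_def by blast
    then show ?thesis using x(2) pV unfolding nbhd_set_iff by blast
  qed
qed

lemma pn_eq:
  assumes m: "minTDS X" and SX: "Sx \<subseteq> X" and g: "g \<in> S2x"
  shows "pn G g X = {pt g}"
proof
  have XV: "X \<subseteq> verts G" using minTDS_V[OF m] .
  show "pn G g X \<subseteq> {pt g}"
  proof
    fix w assume w: "w \<in> pn G g X"
    then have wV: "w \<in> verts G" and e: "nbhd G w \<inter> X = {g}" unfolding pn_def by auto
    have a: "adj G w g" using e unfolding nbhd_def by blast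
    have u: "\<forall>y\<in>X. adj G w y \<longrightarrow> y = g"
    proof (intro ballI impI)
      fix y assume "y \<in> X" "adj G w y"
      then have "y \<in> nbhd G w \<inter> X" using XV unfolding nbhd_def by blast
      then show "y = g" using e by blast
    qed
    have w2: "w \<in> S2x" using L3[OF m SX g wV a u] .
    have "g = pt w" using pt_uniq[OF w2 g a] .
    then show "w \<in> {pt g}" using pt_pt[OF w2] by simp
  qed
  show "{pt g} \<subseteq> pn G g X"
  proof -
    define w where "w = pt g"
    have w2: "w \<in> S2x" and ga: "adj G g w" using pt[OF g] unfolding w_def by auto
    have wV: "w \<in> verts G" using w2 S2V by blast
    have gX: "g \<in> X" using g S2_S SX by blast
    have gV: "g \<in> verts G" using g S2V by blast
    have ptw: "pt w = g" using pt_pt[OF g] unfolding w_def .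
    have "nbhd G w \<inter> X = {g}"
    proof
      show "nbhd G w \<inter> X \<subseteq> {g}"
      proof
        fix y assume "y \<in> nbhd G w \<inter> X"
        then have "y \<in> X" "adj G w y" unfolding nbhd_def by auto
        then have "y = pt w" using L4X[OF m SX w2] by blast
        then show "y \<in> {g}" using ptw by simp
      qed
      show "{g} \<subseteq> nbhd G w \<inter> X" using gX gV ga symG unfolding nbhd_def by blast
    qed
    then show ?thesis using wV unfolding pn_def w_def by blast
  qed
qed

lemma partE':
  assumes T1: "T' \<subseteq> verts G" and T2: "S1x \<subseteq> nbhd_set G T'"
    and T3: "\<forall>T. T \<subseteq> verts G \<and> S1x \<subseteq> nbhd_set G T \<longrightarrow> card T' \<le> card T"
  shows "T' \<subseteq> nbhd_set G S1x - S1x \<and> card T' = card S1x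
     \<and> total_dominating_set G (S1x \<union> T' \<union> S2x) \<and> card (S1x \<union> T' \<union> S2x) = gamma_t G
     \<and> (\<forall>g\<in>S2x. pn G g (S1x \<union> T' \<union> S2x) \<subseteq> S2x \<and> card (pn G g (S1x \<union> T' \<union> S2x)) = 1)"
proof -
  have eqX: "S1x \<union> T' \<union> S2x = Sx \<union> T'" using S_split by blast
  have cov: "\<forall>s\<in>S1x. \<exists>t\<in>T'. adj G t s" using T2 by (auto simp: nbhd_set_iff)
  have "S1x \<subseteq> nbhd_set G (f0 ` S1x)" using T0 S1V by (auto simp: nbhd_set_iff)
  then have "card T' \<le> card (f0 ` S1x)" using T3 T0 by blast
  then have "card T' \<le> card S1x" using T0 by linarith
  from KEYT[OF T1 cov this] have k: "card T' = card S1x" "Sx \<inter> T' = {}" "card (Sx \<union> T') = gamma_t G"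
    by auto
  have tds: "total_dominating_set G (Sx \<union> T')" using UB[OF T1 cov] .
  have m: "minTDS (Sx \<union> T')" using tds k(3) unfolding minTDS_def by blast
  have fT: "finite T'" using T1 finG rev_finite_subset by metis
  have sub: "T' \<subseteq> nbhd_set G S1x - S1x"
  proof
    fix t assume t: "t \<in> T'"
    have "t \<notin> S1x" using t k(2) S1_S by blast
    moreover have "t \<in> nbhd_set G S1x"
    proof (rule ccontr)
      assume nt: "t \<notin> nbhd_set G S1x"
      have tV: "t \<in> verts G" using t T1 by blast
      have "S1x \<subseteq> nbhd_set G (T' - {t})"
      proof
        fix s assume s: "s \<in> S1x"
        then obtain t' where t': "t' \<in> T'" "adj G t' s" using cov by blast
        have "t' \<noteq> t" using nt t' s tV symG unfolding nbhd_set_iff by blast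
        then show "s \<in> nbhd_set G (T' - {t})" using t' s S1V unfolding nbhd_set_iff by blast
      qed
      then have "card T' \<le> card (T' - {t})" using T3 T1 by blast
      moreover have "card (T' - {t}) < card T'"
      proof -
        have "card T' > 0" using fT t card_gt_0_iff by blast
        then show ?thesis using fT t by simp
      qed
      ultimately show False by simp
    qed
    ultimately show "t \<in> nbhd_set G S1x - S1x" by blast
  qed
  have pnp: "\<forall>g\<in>S2x. pn G g (Sx \<union> T') \<subseteq> S2x \<and> card (pn G g (Sx \<union> T')) = 1"
  proof
    fix g assume g: "g \<in> S2x"
    have "pn G g (Sx \<union> T') = {pt g}" using pn_eq[OF m _ g] by blast
    then show "pn G g (Sx \<union> T') \<subseteq> S2x \<and> card (pn G g (Sx \<union> T')) = 1" using pt[OF g] by simp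
  qed
  show ?thesis unfolding eqX using sub k tds pnp by blast
qed

lemma partJ:
  "S1x \<inter> S2x = {} \<and> S1x \<inter> (nbhd_set G S1x - S1x) = {} \<and> S1x \<inter> (nbhd_set G S2x - S2x) = {}
   \<and> S2x \<inter> (nbhd_set G S1x - S1x) = {} \<and> S2x \<inter> (nbhd_set G S2x - S2x) = {}
   \<and> (nbhd_set G S1x - S1x) \<inter> (nbhd_set G S2x - S2x) = {}"
proof (intro conjI)
  show "S1x \<inter> S2x = {}" by (rule S12)
  show "S1x \<inter> (nbhd_set G S1x - S1x) = {}" by blast
  show "S2x \<inter> (nbhd_set G S2x - S2x) = {}" by blast
  show "S1x \<inter> (nbhd_set G S2x - S2x) = {}"
  proof -
    { fix x assume x: "x \<in> S1x" "x \<in> nbhd_set G S2x"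
      then obtain s where "s \<in> S2x" "adj G s x" unfolding nbhd_set_iff by blast
      then have False using C1 x(1) S2_S symG by blast }
    then show ?thesis by blast
  qed
  show "S2x \<inter> (nbhd_set G S1x - S1x) = {}"
  proof -
    { fix x assume x: "x \<in> S2x" "x \<in> nbhd_set G S1x"
      then obtain s where "s \<in> S1x" "adj G s x" unfolding nbhd_set_iff by blast
      then have False using C1 x(1) S2_S by blast }
    then show ?thesis by blast
  qed
  show "(nbhd_set G S1x - S1x) \<inter> (nbhd_set G S2x - S2x) = {}"
  proof -
    { fix x assume x: "x \<in> nbhd_set G S1x" "x \<in> nbhd_set G S2x"
      then obtain s1 s2 where "s1 \<in> S1x" "adj G s1 x" "s2 \<in> S2x" "adj G s2 x" unfolding nbhd_set_iff by blast
      then have False using partI by blast }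
    then show ?thesis by blast
  qed
qed

end


context P3 begin

lemma f0_S1: "s \<in> S1x \<Longrightarrow> f0 s \<in> nbhd_set G S1x - S1x \<and> adj G s (f0 s)"
proof -
  assume s: "s \<in> S1x"
  have a: "adj G s (f0 s)" using f0_adj s S1V by blast
  have "f0 s \<notin> S1x" using C1[OF s] a S1_S by blast
  moreover have "f0 s \<in> nbhd_set G S1x" using a s adjG unfolding nbhd_set_iff by blast
  ultimately show ?thesis using a by blast
qed

lemma partK:
  "gamma_t (induced G (S1x \<union> (nbhd_set G S1x - S1x))) = 2 * card S1x
   \<and> gamma (induced G (S1x \<union> (nbhd_set G S1x - S1x))) = card S1x"
proof -
  define W where "W = S1x \<union> (nbhd_set G S1x - S1x)"
  have WV: "W \<subseteq> verts G" unfolding W_def using S1V by (auto simp: nbhd_set_iff)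
  have fW: "finite W" using WV finG rev_finite_subset by metis
  define Y0 where "Y0 = S1x \<union> f0 ` S1x"
  have Y0t: "total_dominating_set (induced G W) Y0"
    unfolding tds_ind[OF WV]
  proof
    show "Y0 \<subseteq> W" unfolding Y0_def W_def using f0_S1 by blast
    show "\<forall>w\<in>W. \<exists>y\<in>Y0. adj G y w"
    proof
      fix w assume "w \<in> W"
      then consider "w \<in> S1x" | "w \<in> nbhd_set G S1x" unfolding W_def by blast
      then show "\<exists>y\<in>Y0. adj G y w"
      proof cases
        case 1 then show ?thesis using f0_S1[OF 1] symG unfolding Y0_def by blast
      next
        case 2 then show ?thesis unfolding nbhd_set_iff Y0_def by blast
      qed
    qed
  qed
  have cY0: "card Y0 \<le> 2 * card S1x"
  proof -
    have "card Y0 \<le> card S1x + card (f0 ` S1x)" unfolding Y0_def by (rule card_Un_le)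
    then show ?thesis using T0 by linarith
  qed
  have low: "2 * card S1x \<le> card Y" if Y: "total_dominating_set (induced G W) Y" for Y
  proof -
    have Y1: "Y \<subseteq> W" and Y2: "\<forall>w\<in>W. \<exists>y\<in>Y. adj G y w" using Y tds_ind[OF WV] by blast+
    have "total_dominating_set G (S2x \<union> Y)"
      unfolding total_dominating_set_def
    proof
      show "S2x \<union> Y \<subseteq> verts G" using S2V Y1 WV by blast
      show "nbhd_set G (S2x \<union> Y) = verts G"
      proof
        show "nbhd_set G (S2x \<union> Y) \<subseteq> verts G" by (auto simp: nbhd_set_iff)
        show "verts G \<subseteq> nbhd_set G (S2x \<union> Y)"
        proof
          fix v assume v: "v \<in> verts G"
          show "v \<in> nbhd_set G (S2x \<union> Y)"
          proof (cases "v \<in> W")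
            case True then show ?thesis using Y2 v unfolding nbhd_set_iff by blast
          next
            case False
            then have vS1: "v \<notin> S1x" unfolding W_def by blast
            obtain x where x: "x \<in> Sx" "adj G x v" using F3[OF v vS1] by blast
            have "x \<notin> S1x"
            proof
              assume "x \<in> S1x"
              then have "v \<in> nbhd_set G S1x" using x v unfolding nbhd_set_iff by blast
              then show False using False vS1 unfolding W_def by blast
            qed
            then have "x \<in> S2x" using x S_split by blast
            then show ?thesis using x v unfolding nbhd_set_iff by blast
          qed
        qed
      qed
    qed
    then have "gamma_t G \<le> card (S2x \<union> Y)" by (rule gt_le)
    moreover have "card (S2x \<union> Y) \<le> card S2x + card Y" by (rule card_Un_le)
    ultimately show ?thesis using gt_eq by linarith
  qed
  have gt: "gamma_t (induced G W) = 2 * card S1x"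
  proof (rule antisym)
    show "gamma_t (induced G W) \<le> 2 * card S1x" using gt_le[OF Y0t] cY0 by linarith
    show "2 * card S1x \<le> gamma_t (induced G W)" using gt_ge[OF low Y0t] by blast
  qed
  have S1d: "dominating_set (induced G W) S1x"
    unfolding ds_ind[OF WV]
  proof
    show "S1x \<subseteq> W" unfolding W_def by blast
    show "\<forall>v\<in>W. v \<in> S1x \<or> (\<exists>y\<in>S1x. adj G v y)"
    proof
      fix v assume "v \<in> W"
      then consider "v \<in> S1x" | "v \<in> nbhd_set G S1x" unfolding W_def by blast
      then show "v \<in> S1x \<or> (\<exists>y\<in>S1x. adj G v y)"
      proof cases
        case 1 then show ?thesis by blast
      next
        case 2 then show ?thesis using symG unfolding nbhd_set_iff by blast
      qed
    qed
  qed
  have lowd: "card S1x \<le> card Y" if Y: "dominating_set (induced G W) Y" for Y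
  proof -
    have Y1: "Y \<subseteq> W" and Y2: "\<forall>v\<in>W. v \<in> Y \<or> (\<exists>y\<in>Y. adj G v y)" using Y ds_ind[OF WV] by blast+
    have ex: "\<exists>y. y \<in> Y \<and> (y = s \<or> adj G s y)" if s: "s \<in> S1x" for s
    proof -
      have "s \<in> W" using s unfolding W_def by blast
      then show ?thesis using Y2 by blast
    qed
    define psi where "psi s = (SOME y. y \<in> Y \<and> (y = s \<or> adj G s y))" for s
    have psi: "psi s \<in> Y \<and> (psi s = s \<or> adj G s (psi s))" if "s \<in> S1x" for s
      unfolding psi_def using ex[OF that] by (rule someI_ex)
    have inj: "inj_on psi S1x"
    proof (rule inj_onI)
      fix s t assume s: "s \<in> S1x" and t: "t \<in> S1x" and e: "psi s = psi t"
      show "s = t"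
      proof (rule ccontr)
        assume st: "s \<noteq> t"
        have ps: "psi s = s \<or> adj G s (psi s)" and pt': "psi t = t \<or> adj G t (psi s)"
          using psi[OF s] psi[OF t] e by auto
        show False
        proof (cases "psi s = s")
          case True
          then have "adj G t s" using pt' st e by auto
          then show False using C1 t s S1_S by blast
        next
          case False
          then have as: "adj G s (psi s)" using ps by blast
          show False
          proof (cases "psi s = t")
            case True then show False using as C1 s t S1_S by auto
          next
            case False
            then have "adj G t (psi s)" using pt' e by auto
            then show False using C2 s t st as by blast
          qed
        qed
      qed
    qed
    have "psi ` S1x \<subseteq> Y" using psi by blast
    moreover have "finite Y" using Y1 fW rev_finite_subset by metis
    ultimately show ?thesis using card_inj_on_le[OF inj] by blast
  qed
  have g: "gamma (induced G W) = card S1x"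
  proof (rule antisym)
    show "gamma (induced G W) \<le> card S1x" using g_le[OF S1d] .
    show "card S1x \<le> gamma (induced G W)" using g_ge[OF lowd S1d] by blast
  qed
  show ?thesis using gt g unfolding W_def by simp
qed

lemma partL: "gamma_t (induced G (S2x \<union> (nbhd_set G S2x - S2x))) = card S2x"
proof -
  define W where "W = S2x \<union> (nbhd_set G S2x - S2x)"
  have WV: "W \<subseteq> verts G" unfolding W_def using S2V by (auto simp: nbhd_set_iff)
  have S2t: "total_dominating_set (induced G W) S2x"
    unfolding tds_ind[OF WV]
  proof
    show "S2x \<subseteq> W" unfolding W_def by blast
    show "\<forall>w\<in>W. \<exists>y\<in>S2x. adj G y w"
    proof
      fix w assume "w \<in> W"
      then consider "w \<in> S2x" | "w \<in> nbhd_set G S2x" unfolding W_def by blast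
      then show "\<exists>y\<in>S2x. adj G y w"
      proof cases
        case 1 then show ?thesis using pt[OF 1] symG by blast
      next
        case 2 then show ?thesis unfolding nbhd_set_iff by blast
      qed
    qed
  qed
  have low: "card S2x \<le> card Y" if Y: "total_dominating_set (induced G W) Y" for Y
  proof -
    have Y1: "Y \<subseteq> W" and Y2: "\<forall>w\<in>W. \<exists>y\<in>Y. adj G y w" using Y tds_ind[OF WV] by blast+
    have "total_dominating_set G (S1x \<union> f0 ` S1x \<union> Y)"
      unfolding total_dominating_set_def
    proof
      show "S1x \<union> f0 ` S1x \<union> Y \<subseteq> verts G" using S1V T0 Y1 WV by blast
      show "nbhd_set G (S1x \<union> f0 ` S1x \<union> Y) = verts G"
      proof
        show "nbhd_set G (S1x \<union> f0 ` S1x \<union> Y) \<subseteq> verts G" by (auto simp: nbhd_set_iff)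
        show "verts G \<subseteq> nbhd_set G (S1x \<union> f0 ` S1x \<union> Y)"
        proof
          fix v assume v: "v \<in> verts G"
          show "v \<in> nbhd_set G (S1x \<union> f0 ` S1x \<union> Y)"
          proof (cases "v \<in> W")
            case True then show ?thesis using Y2 v unfolding nbhd_set_iff by blast
          next
            case False
            show ?thesis
            proof (cases "v \<in> S1x")
              case True
              then have "adj G (f0 v) v" using f0_S1 symG by blast
              then show ?thesis using True v unfolding nbhd_set_iff by blast
            next
              case vS1: False
              obtain x where x: "x \<in> Sx" "adj G x v" using F3[OF v vS1] by blast
              have "x \<notin> S2x"
              proof
                assume "x \<in> S2x"
                then have "v \<in> nbhd_set G S2x" using x v unfolding nbhd_set_iff by blast
                then show False using False unfolding W_def by blast
              qed
              then have "x \<in> S1x" using x S_split by blast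
              then show ?thesis using x v unfolding nbhd_set_iff by blast
            qed
          qed
        qed
      qed
    qed
    then have "gamma_t G \<le> card (S1x \<union> f0 ` S1x \<union> Y)" by (rule gt_le)
    moreover have "card (S1x \<union> f0 ` S1x \<union> Y) \<le> card S1x + card (f0 ` S1x) + card Y"
      by (metis add_le_mono1 card_Un_le le_trans)
    ultimately show ?thesis using gt_eq T0 by linarith
  qed
  have "gamma_t (induced G W) = card S2x"
  proof (rule antisym)
    show "gamma_t (induced G W) \<le> card S2x" using gt_le[OF S2t] .
    show "card S2x \<le> gamma_t (induced G W)" using gt_ge[OF low S2t] by blast
  qed
  then show ?thesis unfolding W_def .
qed

lemma partM:
  assumes "\<not> graph_iso H K2"
  shows "S1x = {}"
proof (rule ccontr)
  assume "S1x \<noteq> {}"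
  then obtain u where u: "u \<in> S1x" by blast
  have a: "adj G u (f0 u)" using f0_S1[OF u] by blast
  define t where "t = f0 u"
  have tV: "t \<in> verts G" using a adjG unfolding t_def by blast
  have tS: "t \<notin> Sx" using C1[OF u] a unfolding t_def by blast
  have colall: "verts H \<subseteq> colD u"
  proof
    fix h assume h: "h \<in> verts H"
    from dom[OF tV h] notS_col[OF tS] obtain x where x: "(x, h) \<in> D" "adj G x t" by blast
    have xS: "x \<in> Sx" using x(1) unfolding Sx_def by force
    have "x \<notin> S2x" using partI[OF u] a x(2) unfolding t_def by blast
    then have "x \<in> S1x" using xS S_split by blast
    then have "x = u" using C2[OF u] a x(2) unfolding t_def by blast
    then show "h \<in> colD u" using x(1) unfolding colD_def by blast
  qed
  then have cc: "colD u = verts H" using colH by blast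
  have "card (verts H) \<le> 2" using count_u[OF u] gt_eq gt_D unfolding cc by linarith
  obtain a0 where a0: "a0 \<in> verts H" using Hne by blast
  obtain b0 where b0: "b0 \<in> verts H" "b0 \<noteq> a0" using Hother by blast
  have VH: "verts H = {a0, b0}"
  proof (rule ccontr)
    assume "verts H \<noteq> {a0, b0}"
    then obtain c where c: "c \<in> verts H" "c \<noteq> a0" "c \<noteq> b0" using a0 b0 by blast
    have "card {a0, b0, c} \<le> card (verts H)" using a0 b0 c finH by (intro card_mono) auto
    then show False using \<open>card (verts H) \<le> 2\<close> b0 c by simp
  qed
  have "nbhd H a0 \<noteq> {}" using nH a0 unfolding no_isolated_def by blast
  then obtain c where c: "c \<in> verts H" "adj H a0 c" unfolding nbhd_def by blast
  then have ab: "adj H a0 b0" using VH irrH by auto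
  have ba: "adj H b0 a0" using symH[OF ab] .
  have "graph_iso H K2"
    unfolding graph_iso_def
  proof (intro exI[of _ "\<lambda>x. x = a0"] conjI)
    show "bij_betw (\<lambda>x. x = a0) (verts H) (verts K2)"
      unfolding VH K2_def bij_betw_def inj_on_def using b0(2) by auto
    show "\<forall>x\<in>verts H. \<forall>y\<in>verts H. adj H x y = adj K2 (x = a0) (y = a0)"
      unfolding VH K2_def using ab ba irrH b0(2) by auto
  qed
  then show False using assms by blast
qed

end

theorem proposition3:
  fixes G :: "'a graph" and H :: "'b graph" and D :: "('a \<times> 'b) set"
  assumes "simple_graph G" and "simple_graph H"
    and "connected_graph G" and "connected_graph H"
    and "no_isolated G" and "no_isolated H"
    and "gamma_t H = 2"
    and "gamma_t G = gamma_t (cart_prod G H)"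
    and "total_dominating_set (cart_prod G H) D"
    and "card D = gamma_t (cart_prod G H)"
  defines "D' \<equiv> {(g, h) \<in> D. \<exists>h'\<in>verts H. h' \<noteq> h \<and> (g, h') \<in> D}"
  defines "D'' \<equiv> D - D'"
  defines "S \<equiv> fst ` D"
  defines "S' \<equiv> fst ` D'"
  defines "S'' \<equiv> fst ` D''"
  defines "S''i \<equiv> (\<lambda>hi. fst ` {(g, h) \<in> D''. h = hi})"
  defines "P \<equiv> nbhd_set G S - S"
  defines "P' \<equiv> nbhd_set G S' - S'"
  defines "P'' \<equiv> nbhd_set G S'' - S''"
  shows
    \<comment> \<open>(A)\<close>
    "S \<union> P = verts G
   \<and> \<comment> \<open>(B)\<close>
     gamma_t G = 2 * card S' + card S''
   \<and> \<comment> \<open>(C)\<close>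
     independent_set G S'
   \<and> (\<forall>u\<in>S'. \<forall>v\<in>S'. u \<noteq> v \<longrightarrow> nbhd G u \<inter> nbhd G v = {})
   \<and> \<comment> \<open>(D)\<close>
     (\<forall>u\<in>S'. \<forall>v\<in>S''. \<not> adj G u v)
   \<and> \<comment> \<open>(E)\<close>
     (\<exists>k. graph_iso (induced G S'') (kK2 k))
   \<and> \<comment> \<open>(E')\<close>
     (\<forall>T'. (T' \<subseteq> verts G \<and> S' \<subseteq> nbhd_set G T'
            \<and> (\<forall>T. T \<subseteq> verts G \<and> S' \<subseteq> nbhd_set G T \<longrightarrow> card T' \<le> card T))
        \<longrightarrow> T' \<subseteq> P' \<and> card T' = card S'
            \<and> total_dominating_set G (S' \<union> T' \<union> S'')
            \<and> card (S' \<union> T' \<union> S'') = gamma_t G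
            \<and> (\<forall>g\<in>S''. pn G g (S' \<union> T' \<union> S'') \<subseteq> S''
                        \<and> card (pn G g (S' \<union> T' \<union> S'')) = 1))
   \<and> \<comment> \<open>(F)\<close>
     (\<forall>hi\<in>verts H. \<exists>k. graph_iso (induced G (S''i hi)) (kK2 k))
   \<and> \<comment> \<open>(G)\<close>
     (\<forall>hi\<in>verts H. P'' \<union> S''i hi \<subseteq> nbhd_set G (S''i hi))
   \<and> \<comment> \<open>(H)\<close>
     (\<forall>hi\<in>verts H. \<forall>u\<in>S''i hi. \<forall>v\<in>S''i hi. u \<noteq> v \<longrightarrow> nbhd G u \<inter> nbhd G v = {})
   \<and> \<comment> \<open>(I)\<close>
     (\<forall>u\<in>S'. \<forall>v\<in>S''. nbhd G u \<inter> nbhd G v = {})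
   \<and> \<comment> \<open>(J)\<close>
     S' \<inter> S'' = {} \<and> S' \<inter> P' = {} \<and> S' \<inter> P'' = {}
   \<and> S'' \<inter> P' = {} \<and> S'' \<inter> P'' = {} \<and> P' \<inter> P'' = {}
   \<and> \<comment> \<open>(K)\<close>
     gamma_t (induced G (S' \<union> P')) = 2 * gamma (induced G (S' \<union> P'))
   \<and> 2 * gamma (induced G (S' \<union> P')) = 2 * card S'
   \<and> \<comment> \<open>(L)\<close>
     gamma_t (induced G (S'' \<union> P'')) = card S''
   \<and> \<comment> \<open>(M)\<close>
     (\<not> graph_iso H K2 \<longrightarrow> S' = {})"
proof -
  interpret P3 G H D
    by (rule P3.intro[OF assms(1) assms(2) assms(4) assms(5) assms(6) assms(8) assms(9) assms(10)])
  have eS: "S = Sx" using assms(13) unfolding Sx_def by simp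
  have D2m: "(g, h) \<in> D \<and> \<not> (\<exists>h'\<in>verts H. h' \<noteq> h \<and> (g, h') \<in> D) \<longleftrightarrow> colD g = {h}" for g h
  proof
    assume a: "(g, h) \<in> D \<and> \<not> (\<exists>h'\<in>verts H. h' \<noteq> h \<and> (g, h') \<in> D)"
    show "colD g = {h}"
    proof
      show "colD g \<subseteq> {h}"
      proof
        fix h' assume h': "h' \<in> colD g"
        then have "h' \<in> verts H" using colH by blast
        then show "h' \<in> {h}" using a h' unfolding colD_def by blast
      qed
      show "{h} \<subseteq> colD g" using a unfolding colD_def by blast
    qed
  next
    assume c: "colD g = {h}"
    then have "(g, h) \<in> D" unfolding colD_def by blast
    moreover have "\<not> (\<exists>h'\<in>verts H. h' \<noteq> h \<and> (g, h') \<in> D)"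
    proof
      assume "\<exists>h'\<in>verts H. h' \<noteq> h \<and> (g, h') \<in> D"
      then obtain h' where "h' \<noteq> h" "h' \<in> colD g" unfolding colD_def by blast
      then show False using c by blast
    qed
    ultimately show "(g, h) \<in> D \<and> \<not> (\<exists>h'\<in>verts H. h' \<noteq> h \<and> (g, h') \<in> D)" by blast
  qed
  have D''m: "(g, h) \<in> D'' \<longleftrightarrow> colD g = {h}" for g h
    using D2m[of g h] unfolding assms(12) assms(11) by blast
  have eS1: "S' = S1x"
  proof
    show "S' \<subseteq> S1x"
    proof
      fix g assume "g \<in> S'"
      then obtain h where "(g, h) \<in> D'" using assms(14) by force
      then obtain h' where "(g, h) \<in> D" "h' \<noteq> h" "(g, h') \<in> D" unfolding assms(11) by blast
      then show "g \<in> S1x" unfolding S1x_def by blast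
    qed
    show "S1x \<subseteq> S'"
    proof
      fix g assume "g \<in> S1x"
      then obtain h1 h2 where h: "h1 \<noteq> h2" "(g, h1) \<in> D" "(g, h2) \<in> D" unfolding S1x_def by blast
      then have "h2 \<in> verts H" using Dsub by blast
      then have "(g, h1) \<in> D'" unfolding assms(11) using h by (simp; metis)
      then show "g \<in> S'" unfolding assms(14) by force
    qed
  qed
  have eS2: "S'' = S2x"
  proof
    show "S'' \<subseteq> S2x"
    proof
      fix g assume "g \<in> S''"
      then obtain h where "(g, h) \<in> D''" using assms(15) by force
      then show "g \<in> S2x" using D''m unfolding S2x_def by blast
    qed
    show "S2x \<subseteq> S''"
    proof
      fix g assume "g \<in> S2x"
      then obtain h where "colD g = {h}" unfolding S2x_def by blast
      then have "(g, h) \<in> D''" using D''m by blast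
      then show "g \<in> S''" unfolding assms(15) by force
    qed
  qed
  have eSi: "S''i hi = Six hi" for hi
  proof
    show "S''i hi \<subseteq> Six hi"
    proof
      fix g assume "g \<in> S''i hi"
      then obtain h where "(g, h) \<in> D''" "h = hi" using assms(16) by force
      then show "g \<in> Six hi" using D''m unfolding Six_def by blast
    qed
    show "Six hi \<subseteq> S''i hi"
    proof
      fix g assume "g \<in> Six hi"
      then have "(g, hi) \<in> D''" using D''m unfolding Six_def by blast
      then show "g \<in> S''i hi" unfolding assms(16) by force
    qed
  qed
  have eSi': "S''i = Six" using eSi by blast
  have eP: "P = nbhd_set G Sx - Sx" using assms(17) eS by simp
  have eP1: "P' = nbhd_set G S1x - S1x" using assms(18) eS1 by simp
  have eP2: "P'' = nbhd_set G S2x - S2x" using assms(19) eS2 by simp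
  have A: "Sx \<union> (nbhd_set G Sx - Sx) = verts G"
  proof
    show "Sx \<union> (nbhd_set G Sx - Sx) \<subseteq> verts G" using SV by (auto simp: nbhd_set_iff)
    show "verts G \<subseteq> Sx \<union> (nbhd_set G Sx - Sx)"
    proof
      fix v assume v: "v \<in> verts G"
      show "v \<in> Sx \<union> (nbhd_set G Sx - Sx)"
      proof (cases "v \<in> S1x")
        case True then show ?thesis using S1_S by blast
      next
        case False then show ?thesis using F3[OF v False] v by (auto simp: nbhd_set_iff)
      qed
    qed
  qed
  have C: "independent_set G S1x" unfolding independent_set_def using S1V C1 S1_S by blast
  have C': "\<forall>u\<in>S1x. \<forall>v\<in>S1x. u \<noteq> v \<longrightarrow> nbhd G u \<inter> nbhd G v = {}"
  proof (intro ballI impI)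
    fix u v assume "u \<in> S1x" "v \<in> S1x" "u \<noteq> v"
    then show "nbhd G u \<inter> nbhd G v = {}" unfolding nbhd_def using C2 by blast
  qed
  have Dp: "\<forall>u\<in>S1x. \<forall>v\<in>S2x. \<not> adj G u v" using C1 S2_S by blast
  have Fp: "\<forall>hi\<in>verts H. \<exists>k. graph_iso (induced G (Six hi)) (kK2 k)" using partF by blast
  have Gp: "\<forall>hi\<in>verts H. (nbhd_set G S2x - S2x) \<union> Six hi \<subseteq> nbhd_set G (Six hi)" using partG by blast
  have Hp: "\<forall>hi\<in>verts H. \<forall>u\<in>Six hi. \<forall>v\<in>Six hi. u \<noteq> v \<longrightarrow> nbhd G u \<inter> nbhd G v = {}"
  proof (intro ballI impI)
    fix hi u v assume "u \<in> Six hi" "v \<in> Six hi" "u \<noteq> v"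
    then show "nbhd G u \<inter> nbhd G v = {}" unfolding nbhd_def using partH by blast
  qed
  have Ip: "\<forall>u\<in>S1x. \<forall>v\<in>S2x. nbhd G u \<inter> nbhd G v = {}"
  proof (intro ballI impI)
    fix u v assume "u \<in> S1x" "v \<in> S2x"
    then show "nbhd G u \<inter> nbhd G v = {}" unfolding nbhd_def using partI by blast
  qed
  have E'p: "\<forall>T'. (T' \<subseteq> verts G \<and> S1x \<subseteq> nbhd_set G T'
            \<and> (\<forall>T. T \<subseteq> verts G \<and> S1x \<subseteq> nbhd_set G T \<longrightarrow> card T' \<le> card T))
        \<longrightarrow> T' \<subseteq> nbhd_set G S1x - S1x \<and> card T' = card S1x
            \<and> total_dominating_set G (S1x \<union> T' \<union> S2x)
            \<and> card (S1x \<union> T' \<union> S2x) = gamma_t G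
            \<and> (\<forall>g\<in>S2x. pn G g (S1x \<union> T' \<union> S2x) \<subseteq> S2x
                        \<and> card (pn G g (S1x \<union> T' \<union> S2x)) = 1)"
    by (intro allI impI, elim conjE, rule partE'; assumption)
  have K1: "gamma_t (induced G (S1x \<union> (nbhd_set G S1x - S1x))) = 2 * gamma (induced G (S1x \<union> (nbhd_set G S1x - S1x)))"
    using partK by simp
  have K2: "2 * gamma (induced G (S1x \<union> (nbhd_set G S1x - S1x))) = 2 * card S1x"
    using partK by simp
  have J: "S1x \<inter> S2x = {}" "S1x \<inter> (nbhd_set G S1x - S1x) = {}" "S1x \<inter> (nbhd_set G S2x - S2x) = {}"
   "S2x \<inter> (nbhd_set G S1x - S1x) = {}" "S2x \<inter> (nbhd_set G S2x - S2x) = {}"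
   "(nbhd_set G S1x - S1x) \<inter> (nbhd_set G S2x - S2x) = {}"
    using partJ by auto
  have Mp: "\<not> graph_iso H K2 \<longrightarrow> S1x = {}" using partM by blast
  show ?thesis
    unfolding eS eS1 eS2 eSi' eP eP1 eP2
    by (intro conjI) (fact A gt_eq C C' Dp partE E'p Fp Gp Hp Ip J K1 K2 partL Mp)+
qed

end
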